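(* Let $A$ be a topological ring. If the completion of $A$ is a field, then $A$ is topologically simple. If $A$ is a Huber ring whose topology is defined by an absolute value, then conversely $A$ topologically simple implies that its completion is a field.
   Context: A topological ring is topologically simple if the closure of the zero ideal is its only closed ideal (equivalently, every nonzero element of $A/\overline{(0)}$ is a topological unit, i.e. generates a dense ideal). *)

theory Defs
  imports "HOL-Analysis.Analysis"
begin

definition topological_ring :: "'a::{comm_ring_1,topological_space} itself \<Rightarrow> bool" where
  "topological_ring _ \<longleftrightarrow>
     continuous_on UNIV (\<lambda>p::'a \<times> 'a. fst p + snd p) \<and>
     continuous_on UNIV (\<lambda>x::'a. - x) \<and>
     continuous_on UNIV (\<lambda>p::'a \<times> 'a. fst p * snd p)"

definition ring_ideal :: "'a::comm_ring_1 set \<Rightarrow> bool" where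
  "ring_ideal J \<longleftrightarrow> 0 \<in> J \<and> (\<forall>x\<in>J. \<forall>y\<in>J. x + y \<in> J) \<and> (\<forall>x\<in>J. - x \<in> J)
     \<and> (\<forall>a. \<forall>x\<in>J. a * x \<in> J)"

definition topologically_simple :: "'a::{comm_ring_1,topological_space} itself \<Rightarrow> bool" where
  "topologically_simple _ \<longleftrightarrow>
     (\<forall>J::'a set. ring_ideal J \<and> closed J \<longrightarrow> J = closure {0} \<or> J = UNIV)"

definition add_cauchy :: "'a::{ab_group_add,topological_space} filter \<Rightarrow> bool" where
  "add_cauchy F \<longleftrightarrow> (\<forall>U. open U \<and> 0 \<in> U \<longrightarrow>
      (\<exists>S. eventually (\<lambda>x. x \<in> S) F \<and> (\<forall>x\<in>S. \<forall>y\<in>S. x - y \<in> U)))"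

definition add_complete :: "'a::{ab_group_add,topological_space} itself \<Rightarrow> bool" where
  "add_complete _ \<longleftrightarrow> (\<forall>F::'a filter. F \<noteq> bot \<and> add_cauchy F \<longrightarrow> (\<exists>l. F \<le> nhds l))"

definition ring_hom_fun :: "('a::comm_ring_1 \<Rightarrow> 'b::comm_ring_1) \<Rightarrow> bool" where
  "ring_hom_fun i \<longleftrightarrow> i 1 = 1 \<and> (\<forall>x y. i (x + y) = i x + i y) \<and> (\<forall>x y. i (x * y) = i x * i y)"

definition is_completion ::
  "('a::{comm_ring_1,topological_space} \<Rightarrow> 'b::{comm_ring_1,t2_space}) \<Rightarrow> bool" where
  "is_completion i \<longleftrightarrow> topological_ring TYPE('b) \<and> add_complete TYPE('b) \<and>
     ring_hom_fun i \<and> closure (range i) = UNIV \<and>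
     (\<forall>S::'a set. open S \<longleftrightarrow> (\<exists>U. open U \<and> S = i -` U))"

definition is_field_ring :: "'b::comm_ring_1 itself \<Rightarrow> bool" where
  "is_field_ring _ \<longleftrightarrow> (0::'b) \<noteq> 1 \<and> (\<forall>x::'b. x \<noteq> 0 \<longrightarrow> (\<exists>y. x * y = 1))"

text \<open>Huber rings.  For a subring A0 and a finite set T, the ideal I of A0 generated by T
 has n-th power I^n = the A0-ideal generated by the monomials of degree n in T.\<close>
inductive_set sub_span :: "'a::comm_ring_1 set \<Rightarrow> 'a set \<Rightarrow> 'a set" for A0 S where
  zero: "0 \<in> sub_span A0 S"
| gen: "a \<in> A0 \<Longrightarrow> s \<in> S \<Longrightarrow> a * s \<in> sub_span A0 S"
| add: "x \<in> sub_span A0 S \<Longrightarrow> y \<in> sub_span A0 S \<Longrightarrow> x + y \<in> sub_span A0 S"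

definition ideal_pow :: "'a::comm_ring_1 set \<Rightarrow> 'a set \<Rightarrow> nat \<Rightarrow> 'a set" where
  "ideal_pow A0 T n = sub_span A0 {prod_list xs | xs. set xs \<subseteq> T \<and> length xs = n}"

definition subring :: "'a::comm_ring_1 set \<Rightarrow> bool" where
  "subring A0 \<longleftrightarrow> 1 \<in> A0 \<and> (\<forall>x\<in>A0. \<forall>y\<in>A0. x + y \<in> A0 \<and> x * y \<in> A0) \<and> (\<forall>x\<in>A0. - x \<in> A0)"

definition huber_ring :: "'a::{comm_ring_1,topological_space} itself \<Rightarrow> bool" where
  "huber_ring _ \<longleftrightarrow> topological_ring TYPE('a) \<and>
     (\<exists>(A0::'a set) T. subring A0 \<and> open A0 \<and> finite T \<and> T \<subseteq> A0 \<and>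
        (\<forall>n. \<exists>U. open U \<and> 0 \<in> U \<and> U \<subseteq> ideal_pow A0 T n) \<and>
        (\<forall>U. open U \<and> 0 \<in> U \<longrightarrow> (\<exists>n. ideal_pow A0 T n \<subseteq> U)))"

definition absolute_value :: "('a::comm_ring_1 \<Rightarrow> real) \<Rightarrow> bool" where
  "absolute_value f \<longleftrightarrow> (\<forall>x. f x \<ge> 0) \<and> (\<forall>x. f x = 0 \<longleftrightarrow> x = 0) \<and> f 1 = 1 \<and>
     (\<forall>x y. f (x * y) = f x * f y) \<and> (\<forall>x y. f (x + y) \<le> f x + f y)"

definition topology_defined_by_abs :: "('a::{comm_ring_1,topological_space} \<Rightarrow> real) \<Rightarrow> bool" where
  "topology_defined_by_abs f \<longleftrightarrow> absolute_value f \<and>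
     (\<forall>S::'a set. open S \<longleftrightarrow> (\<forall>x\<in>S. \<exists>e>0. \<forall>y. f (y - x) < e \<longrightarrow> y \<in> S))"

end

theory Submission
  imports Defs
begin


lemma hom_basic:
  assumes "ring_hom_fun i"
  shows "i 0 = 0" "\<And>x. i (- x) = - i x" "\<And>x y. i (x - y) = i x - i y"
proof -
  have a: "\<And>x y. i (x + y) = i x + i y" using assms by (simp add: ring_hom_fun_def)
  show z: "i 0 = 0" using a[of 0 0] by simp
  show "\<And>x. i (- x) = - i x" using a z by (metis add.right_inverse add_eq_0_iff)
  then show "\<And>x y. i (x - y) = i x - i y" using a by (metis diff_conv_add_uminus)
qed

lemma abs_basic:
  assumes "absolute_value f"
  shows "f 0 = 0" "f 1 = 1" "\<And>x. f (- x) = f x" "\<And>x y. f (x - y) = f (y - x)"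
    "\<And>x. f x \<ge> 0" "\<And>x y. f (x * y) = f x * f y" "\<And>x y. f (x + y) \<le> f x + f y"
    "\<And>x. f x = 0 \<longleftrightarrow> x = 0"
    "\<And>x y z. f (x - z) \<le> f (x - y) + f (y - z)"
proof -
  show m: "\<And>x y. f (x * y) = f x * f y" "\<And>x. f x \<ge> 0" "\<And>x. f x = 0 \<longleftrightarrow> x = 0"
     "\<And>x y. f (x + y) \<le> f x + f y"
    using assms by (auto simp: absolute_value_def)
  show "f 0 = 0" using m by simp
  show o: "f 1 = 1" using assms by (simp add: absolute_value_def)
  have "f (-1) * f (-1) = 1" using m(1)[of "-1" "-1"] o by simp
  hence "(f (-1) - 1) * (f (-1) + 1) = 0" by (simp add: algebra_simps)
  moreover have "f (-1) + 1 > 0" using m(2)[of "-1"] by simp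
  ultimately have n1: "f (-1) = 1" by simp
  show neg: "\<And>x. f (- x) = f x" using m(1) n1 by (metis mult_1 mult_minus1)
  show "\<And>x y. f (x - y) = f (y - x)" using neg by (metis minus_diff_eq)
  show "\<And>x y z. f (x - z) \<le> f (x - y) + f (y - z)" using m(4) by (metis diff_add_cancel add_diff_eq)
qed



lemma calc_lemma:
  fixes f :: "'a::comm_ring_1 \<Rightarrow> real"
  assumes av: "absolute_value f"
    and h1: "f (a*y - 1) < \<epsilon>" and h2: "f (a'*y' - 1) < \<epsilon>" and h3: "f (a - a') < \<eta>0"
    and d1: "f a \<ge> \<delta>" and d2: "f a' \<ge> \<delta>" and e1: "\<epsilon> \<le> 1" and e2: "\<epsilon> \<le> \<eta>*\<delta>/8"
    and eta0: "\<eta>0 = \<eta>*\<delta>*\<delta>/8" and dp: "\<delta> > 0" and ep: "\<eta> > 0"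
  shows "f (y - y') < \<eta>"
proof -
  note ab = abs_basic[OF av]
  have eq: "a * (y - y') = (a*y - 1) - (a'*y' - 1) + (a' - a) * y'" by (simp add: algebra_simps)
  have "f (a * (y - y')) \<le> f (a*y - 1) + f (a'*y' - 1) + f (a' - a) * f y'"
  proof -
    have "f (a * (y - y')) \<le> f ((a*y - 1) - (a'*y' - 1)) + f ((a' - a) * y')"
      unfolding eq by (rule ab(7))
    moreover have "f ((a*y - 1) - (a'*y' - 1)) \<le> f (a*y - 1) + f (a'*y' - 1)"
      using ab(7)[of "a*y - 1" "- (a'*y' - 1)"] ab(3)[of "a'*y' - 1"] by simp
    ultimately show ?thesis using ab(6) by simp
  qed
  moreover have fy: "f y' * \<delta> \<le> 2"
  proof -
    have "f (a' * y') \<le> f (a'*y' - 1) + f 1" using ab(7)[of "a'*y' - 1" 1] by simp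
    hence "f a' * f y' \<le> 2" using h2 e1 ab(2) ab(6) by simp
    moreover have "f y' * \<delta> \<le> f y' * f a'" using d2 ab(5) by (simp add: mult_left_mono)
    ultimately show ?thesis by (simp add: mult.commute)
  qed
  moreover have "f (a' - a) * f y' \<le> \<eta>0 * f y'" using h3 ab(4)[of a' a] ab(5)[of y'] by (simp add: mult_right_mono)
  ultimately have "f a * f (y - y') < 2*\<epsilon> + \<eta>0 * f y'" using h1 h2 ab(6) by simp
  moreover have "\<eta>0 * f y' \<le> \<eta> * \<delta> / 4"
  proof -
    have "\<eta>0 * f y' = (\<eta>*\<delta>/8) * (f y' * \<delta>)" using eta0 by (simp add: algebra_simps)
    also have "\<dots> \<le> (\<eta>*\<delta>/8) * 2" using fy dp ep by (intro mult_left_mono) auto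
    finally show ?thesis by (simp add: mult.commute)
  qed
  ultimately have "f a * f (y - y') < \<eta> * \<delta> / 2" using e2 by simp
  moreover have "\<delta> * f (y - y') \<le> f a * f (y - y')" using d1 ab(5) by (simp add: mult_right_mono)
  moreover have "\<eta> * \<delta> / 2 < \<delta> * \<eta>" using dp ep by simp
  ultimately have "\<delta> * f (y - y') < \<delta> * \<eta>" by linarith
  thus ?thesis using dp by simp
qed



lemma ball_open:
  fixes f :: "'a::{comm_ring_1,topological_space} \<Rightarrow> real"
  assumes tf: "topology_defined_by_abs f"
  shows "open {y. f (y - x) < e}"
proof -
  have av: "absolute_value f" using tf by (simp add: topology_defined_by_abs_def)
  note ab = abs_basic[OF av]
  have top: "\<And>S::'a set. open S \<longleftrightarrow> (\<forall>x\<in>S. \<exists>e>0. \<forall>y. f (y - x) < e \<longrightarrow> y \<in> S)"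
    using tf by (simp add: topology_defined_by_abs_def)
  show ?thesis unfolding top
  proof
    fix w assume "w \<in> {y. f (y - x) < e}"
    hence w: "f (w - x) < e" by simp
    show "\<exists>e'>0. \<forall>y. f (y - w) < e' \<longrightarrow> y \<in> {y. f (y - x) < e}"
    proof (intro exI[of _ "e - f (w - x)"] conjI allI impI)
      show "e - f (w - x) > 0" using w by simp
      fix y assume "f (y - w) < e - f (w - x)"
      thus "y \<in> {y. f (y - x) < e}" using ab(9)[of y x w] by simp
    qed
  qed
qed

lemma closure_abs:
  fixes f :: "'a::{comm_ring_1,topological_space} \<Rightarrow> real"
  assumes tf: "topology_defined_by_abs f"
  shows "z \<in> closure S \<longleftrightarrow> (\<forall>e>0. \<exists>s\<in>S. f (s - z) < e)"
proof
  have av: "absolute_value f" using tf by (simp add: topology_defined_by_abs_def)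
  note ab = abs_basic[OF av]
  assume z: "z \<in> closure S"
  show "\<forall>e>0. \<exists>s\<in>S. f (s - z) < e"
  proof (intro allI impI)
    fix e :: real assume "e > 0"
    hence "z \<in> {y. f (y - z) < e}" using ab(1) by simp
    hence "S \<inter> {y. f (y - z) < e} \<noteq> {}" using z ball_open[OF tf, of z e]
      unfolding closure_iff_nhds_not_empty by (metis order_refl)
    thus "\<exists>s\<in>S. f (s - z) < e" by auto
  qed
next
  have top: "\<And>S::'a set. open S \<longleftrightarrow> (\<forall>x\<in>S. \<exists>e>0. \<forall>y. f (y - x) < e \<longrightarrow> y \<in> S)"
    using tf by (simp add: topology_defined_by_abs_def)
  assume h: "\<forall>e>0. \<exists>s\<in>S. f (s - z) < e"
  show "z \<in> closure S"
  proof (rule ccontr)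
    assume "z \<notin> closure S"
    moreover have "open (- closure S)" by auto
    ultimately have "\<exists>e>0. \<forall>y. f (y - z) < e \<longrightarrow> y \<in> - closure S"
      using top[of "- closure S"] by simp
    then obtain e where e: "e > 0" "\<forall>y. f (y - z) < e \<longrightarrow> y \<in> - closure S" by blast
    obtain s where s: "s \<in> S" "f (s - z) < e" using h e(1) by blast
    have "s \<in> - closure S" using e(2) s(2) by blast
    thus False using closure_subset s(1) by blast
  qed
qed

lemma ideal_closure:
  fixes f :: "'a::{comm_ring_1,topological_space} \<Rightarrow> real" and x :: 'a
  assumes tf: "topology_defined_by_abs f"
  shows "ring_ideal (closure (range (\<lambda>y. x * y)))"
proof -
  have av: "absolute_value f" using tf by (simp add: topology_defined_by_abs_def)
  note ab = abs_basic[OF av]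
  note cl = closure_abs[OF tf]
  define J where "J = closure (range (\<lambda>y. x * y))"
  have "ring_ideal J"
unfolding ring_ideal_def
  proof (intro conjI ballI allI)
    have "0 \<in> range (\<lambda>y. x * y)" by (rule range_eqI[of _ _ 0]) simp
    thus "0 \<in> J" unfolding J_def by (rule subsetD[OF closure_subset])
  next
    fix u v assume u: "u \<in> J" and v: "v \<in> J"
    show "u + v \<in> J" unfolding J_def cl
    proof (intro allI impI)
      fix d :: real assume "d > 0"
      hence d2: "d/2 > 0" by simp
      obtain s where s: "s \<in> range (\<lambda>y. x * y)" "f (s - u) < d/2"
        using u d2 unfolding J_def cl by blast
      obtain t where t: "t \<in> range (\<lambda>y. x * y)" "f (t - v) < d/2"
        using v d2 unfolding J_def cl by blast
      obtain ys yt where "s = x * ys" "t = x * yt" using s t by auto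
      hence "s + t = x * (ys + yt)" by (simp add: distrib_left)
      hence "s + t \<in> range (\<lambda>y. x * y)" by blast
      moreover have "f ((s + t) - (u + v)) < d"
        using ab(7)[of "s - u" "t - v"] s t by (simp add: algebra_simps)
      ultimately show "\<exists>w\<in>range (\<lambda>y. x * y). f (w - (u + v)) < d" by blast
    qed
  next
    fix u assume u: "u \<in> J"
    show "- u \<in> J" unfolding J_def cl
    proof (intro allI impI)
      fix d :: real assume "d > 0"
      then obtain s where s: "s \<in> range (\<lambda>y. x * y)" "f (s - u) < d"
        using u unfolding J_def cl by blast
      obtain ys where "s = x * ys" using s by auto
      hence "- s = x * (- ys)" by simp
      hence "- s \<in> range (\<lambda>y. x * y)" by blast
      moreover have "f (- s - - u) < d" using s ab(3)[of "s - u"] by (simp add: algebra_simps)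
      ultimately show "\<exists>w\<in>range (\<lambda>y. x * y). f (w - - u) < d" by blast
    qed
  next
    fix c u assume u: "u \<in> J"
    show "c * u \<in> J" unfolding J_def cl
    proof (intro allI impI)
      fix d :: real assume d: "d > 0"
      have "f c + 1 > 0" using ab(5)[of c] by simp
      hence "d / (f c + 1) > 0" using d by simp
      then obtain s where s: "s \<in> range (\<lambda>y. x * y)" "f (s - u) < d / (f c + 1)"
        using u unfolding J_def cl by blast
      obtain ys where "s = x * ys" using s by auto
      hence "c * s = x * (c * ys)" by (simp add: mult.left_commute)
      hence "c * s \<in> range (\<lambda>y. x * y)" by blast
      moreover have "f (c * s - c * u) < d"
      proof -
        have "f (c * s - c * u) = f c * f (s - u)" using ab(6)[of c "s - u"] by (simp add: algebra_simps)
        also have "\<dots> \<le> (f c + 1) * f (s - u)" using ab(5)[of "s - u"] by (simp add: mult_right_mono)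
        also have "\<dots> < (f c + 1) * (d / (f c + 1))" using s(2) \<open>f c + 1 > 0\<close> by (intro mult_strict_left_mono) auto
        also have "\<dots> = d" using \<open>f c + 1 > 0\<close> by simp
        finally show ?thesis .
      qed
      ultimately show "\<exists>w\<in>range (\<lambda>y. x * y). f (w - c * u) < d" by blast
    qed
  qed
  thus ?thesis unfolding J_def .
qed

lemma dense_ideal:
  fixes f :: "'a::{comm_ring_1,topological_space} \<Rightarrow> real"
  assumes tf: "topology_defined_by_abs f" and ts: "topologically_simple TYPE('a)"
    and x: "x \<noteq> 0" and e: "e > 0"
  shows "\<exists>y. f (x * y - 1) < e"
proof -
  have av: "absolute_value f" using tf by (simp add: topology_defined_by_abs_def)
  note ab = abs_basic[OF av]
  note cl = closure_abs[OF tf]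
  define J where "J = closure (range (\<lambda>y. x * y))"
  have idl: "ring_ideal J" using ideal_closure[OF tf] unfolding J_def .
  have "closed J" unfolding J_def by simp
  hence "ring_ideal J \<and> closed J" using idl by simp
  moreover have "\<forall>J::'a set. ring_ideal J \<and> closed J \<longrightarrow> J = closure {0} \<or> J = UNIV"
    using ts by (simp add: topologically_simple_def)
  ultimately have dis: "J = closure {0} \<or> J = UNIV" by blast
  have xr: "x \<in> range (\<lambda>y. x * y)" by (rule range_eqI[of _ _ 1]) simp
  have xJ: "x \<in> J" unfolding J_def by (rule subsetD[OF closure_subset xr])
  have fx: "f x > 0" using x ab(8)[of x] ab(5)[of x] by simp
  have "x \<notin> closure {0}"
  proof
    assume "x \<in> closure {0}"
    hence "\<forall>e>0. \<exists>s\<in>{0}. f (s - x) < e" using cl[of x "{0}"] by simp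
    hence "\<exists>s\<in>{0}. f (s - x) < f x" using fx by simp
    hence "f (0 - x) < f x" by simp
    thus False using ab(3)[of x] by simp
  qed
  hence "J = UNIV" using dis xJ by auto
  hence "1 \<in> closure (range (\<lambda>y. x * y))" unfolding J_def by simp
  hence "\<forall>e>0. \<exists>s\<in>range (\<lambda>y. x * y). f (s - 1) < e" using cl[of 1] by simp
  hence "\<exists>s\<in>range (\<lambda>y. x * y). f (s - 1) < e" using e by simp
  thus ?thesis by auto
qed



lemma part1:
  fixes i :: "'a::{comm_ring_1,topological_space} \<Rightarrow> 'b::{comm_ring_1,t2_space}"
  assumes comp: "is_completion i" and fld: "is_field_ring TYPE('b)"
  shows "topologically_simple TYPE('a)"
proof -
  from comp have tr: "topological_ring TYPE('b)" and hom: "ring_hom_fun i"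
    and dense: "closure (range i) = UNIV"
    and top: "\<And>S. open S \<longleftrightarrow> (\<exists>U. open U \<and> S = i -` U)" by (auto simp: is_completion_def)
  have mulc: "continuous_on UNIV (\<lambda>p::'b\<times>'b. fst p * snd p)" using tr by (simp add: topological_ring_def)
  show ?thesis unfolding topologically_simple_def
  proof (intro allI impI)
    fix J :: "'a set" assume "ring_ideal J \<and> closed J"
    hence idl: "ring_ideal J" and cl: "closed J" by auto
    have J0: "0 \<in> J" and Jm: "\<And>a x. x \<in> J \<Longrightarrow> a * x \<in> J" using idl by (auto simp: ring_ideal_def)
    show "J = closure {0} \<or> J = UNIV"
    proof (cases "\<forall>x\<in>J. i x = 0")
      case True
      have "closure {0} \<subseteq> J" using J0 cl by (simp add: closure_minimal)
      moreover have "J \<subseteq> closure {0}"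
      proof
        fix x assume "x \<in> J" hence ix: "i x = 0" using True by auto
        show "x \<in> closure {0}" unfolding closure_iff_nhds_not_empty
        proof (intro allI impI)
          fix A S assume "S \<subseteq> A" "open S" "x \<in> S"
          then obtain U where "open U" "S = i -` U" using top by blast
          hence "0 \<in> S" using \<open>x \<in> S\<close> ix hom_basic(1)[OF hom] by auto
          thus "{0} \<inter> A \<noteq> {}" using \<open>S \<subseteq> A\<close> by auto
        qed
      qed
      ultimately show ?thesis by auto
    next
      case False
      then obtain x where xJ: "x \<in> J" and ix: "i x \<noteq> 0" by auto
      then obtain y where xy: "i x * y = 1" using fld by (auto simp: is_field_ring_def)
      have "1 \<in> J"
      proof (rule ccontr)
        assume n1: "1 \<notin> J"
        have "open (- J)" using cl by (simp add: closed_def)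
        then obtain U where U: "open U" "- J = i -` U" using top by blast
        have "i 1 \<in> U" using n1 U by auto
        hence U1: "1 \<in> U" using hom by (simp add: ring_hom_fun_def)
        have mc: "continuous_on UNIV (\<lambda>z. i x * z)"
          using continuous_on_compose2[OF mulc, of UNIV "\<lambda>z. (i x, z)"]
            continuous_on_Pair[OF continuous_on_const continuous_on_id] by auto
        hence op: "open ((\<lambda>z. i x * z) -` U)" using U(1)
          using continuous_on_open_vimage[OF open_UNIV] by auto
        have "y \<in> (\<lambda>z. i x * z) -` U" using xy U1 by simp
        hence "y \<in> closure (range i)" using dense by auto
        then have "range i \<inter> ((\<lambda>z. i x * z) -` U) \<noteq> {}"
          using op \<open>y \<in> (\<lambda>z. i x * z) -` U\<close> unfolding closure_iff_nhds_not_empty by blast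
        then obtain a where "i a \<in> (\<lambda>z. i x * z) -` U" by auto
        hence "i (a * x) \<in> U" using hom by (simp add: ring_hom_fun_def mult.commute)
        hence "a * x \<notin> J" using U(2) by auto
        thus False using Jm xJ by auto
      qed
      hence "J = UNIV" using Jm by (metis UNIV_eq_I mult.right_neutral)
      thus ?thesis by auto
    qed
  qed
qed



lemma part2:
  fixes i :: "'a::{comm_ring_1,topological_space} \<Rightarrow> 'b::{comm_ring_1,t2_space}"
    and f :: "'a \<Rightarrow> real"
  assumes comp: "is_completion i" and tf: "topology_defined_by_abs f"
    and ts: "topologically_simple TYPE('a)"
  shows "is_field_ring TYPE('b)"
proof -
  from comp have tr: "topological_ring TYPE('b)" and hom: "ring_hom_fun i"
    and dense: "closure (range i) = UNIV" and cpl: "add_complete TYPE('b)"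
    and top: "\<And>S. open S \<longleftrightarrow> (\<exists>U. open U \<and> S = i -` U)" by (auto simp: is_completion_def)
  have mulc: "continuous_on UNIV (\<lambda>p::'b\<times>'b. fst p * snd p)" using tr by (simp add: topological_ring_def)
  have addc: "continuous_on UNIV (\<lambda>p::'b\<times>'b. fst p + snd p)" using tr by (simp add: topological_ring_def)
  have negc: "continuous_on UNIV (\<lambda>x::'b. - x)" using tr by (simp add: topological_ring_def)
  have av: "absolute_value f" using tf by (simp add: topology_defined_by_abs_def)
  note ab = abs_basic[OF av]
  have topA: "\<And>S::'a set. open S \<longleftrightarrow> (\<forall>x\<in>S. \<exists>e>0. \<forall>y. f (y - x) < e \<longrightarrow> y \<in> S)"
    using tf by (simp add: topology_defined_by_abs_def)
  note hb = hom_basic[OF hom]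
  have i1: "i 1 = 1" and imul: "\<And>x y. i (x * y) = i x * i y" using hom by (auto simp: ring_hom_fun_def)
  have nb: "\<exists>e>0. \<forall>y. f (y - x0) < e \<longrightarrow> i y \<in> U" if "open U" "i x0 \<in> U" for U x0
  proof -
    have "open (i -` U)" using top that(1) by blast
    moreover have "x0 \<in> i -` U" using that(2) by simp
    ultimately show ?thesis using topA[of "i -` U"] by auto
  qed
  have bp: "\<exists>U. open U \<and> {y. f (y - x0) < e} = i -` U" for x0 e
    using top ball_open[OF tf, of x0 e] by blast
  have dens: "\<exists>a. i a \<in> Ov" if "open Ov" "z \<in> Ov" for Ov z
  proof -
    have "z \<in> closure (range i)" using dense by simp
    hence "range i \<inter> Ov \<noteq> {}" using that unfolding closure_iff_nhds_not_empty by (metis order_refl)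
    thus ?thesis by auto
  qed
  have subc: "continuous_on UNIV (\<lambda>p::'b\<times>'b. fst p - snd p)"
  proof -
    have c1: "continuous_on UNIV (\<lambda>p::'b\<times>'b. (fst p, - snd p))"
      by (intro continuous_on_Pair continuous_on_fst continuous_on_id
          continuous_on_compose2[OF negc continuous_on_snd[OF continuous_on_id]]) auto
    have "continuous_on UNIV (\<lambda>p::'b\<times>'b. fst (fst p, - snd p) + snd (fst p, - snd p))"
      by (rule continuous_on_compose2[OF addc c1]) auto
    thus ?thesis by simp
  qed
  have nz: "(0::'b) \<noteq> 1"
  proof
    assume h01: "(0::'b) = 1"
    obtain U where U: "open U" "{y. f (y - 0) < 1/2} = i -` U" using bp by blast
    have "0 \<in> {y. f (y - 0) < 1/2}" using ab(1) by simp
    hence "i 0 \<in> U" using U(2) by auto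
    moreover have "i 1 = i 0" using i1 hb(1) h01 by simp
    ultimately have "1 \<in> {y. f (y - 0) < 1/2}" using U(2) by auto
    thus False using ab(2) by simp
  qed
  have inv: "\<exists>c. b * c = 1" if bnz: "b \<noteq> 0" for b :: 'b
  proof -
    obtain P Q where PQ: "open P" "open Q" "b \<in> P" "0 \<in> Q" "P \<inter> Q = {}"
      using hausdorff[OF bnz] by blast
    obtain \<delta> where dp: "\<delta> > 0" and dQ: "\<forall>y. f (y - 0) < \<delta> \<longrightarrow> i y \<in> Q"
      using nb[OF PQ(2), of 0] PQ(4) hb(1) by auto
    have low: "f a \<ge> \<delta>" if "i a \<in> P" for a
    proof (rule ccontr)
      assume "\<not> f a \<ge> \<delta>"
      hence "i a \<in> Q" using dQ by simp
      thus False using that PQ(5) by blast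
    qed
    define g where "g p = (i (fst p), f (fst p * snd p - 1))" for p :: "'a \<times> 'a"
    define H where "H = filtercomap g (nhds b \<times>\<^sub>F nhds 0)"
    have ev: "eventually (\<lambda>p. i (fst p) \<in> W \<and> f (fst p * snd p - 1) < e) H"
      if "open W" "b \<in> W" "e > 0" for W e
    proof -
      have e1: "eventually (\<lambda>x. x \<in> W) (nhds b)" using that(1,2) by (rule eventually_nhds_in_open)
      have e2: "eventually (\<lambda>r::real. r \<in> {..<e}) (nhds 0)" using that(3)
        by (intro eventually_nhds_in_open) auto
      have "eventually (\<lambda>q. fst q \<in> W \<and> snd q \<in> {..<e}) (nhds b \<times>\<^sub>F nhds 0)"
        by (rule eventually_prodI[OF e1 e2])
      thus ?thesis unfolding H_def eventually_filtercomap
        by (intro exI[of _ "\<lambda>q. fst q \<in> W \<and> snd q \<in> {..<e}"]) (auto simp: g_def)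
    qed
    have Hne: "H \<noteq> bot" unfolding H_def
    proof (rule filtercomap_neq_bot)
      fix R :: "'b \<times> real \<Rightarrow> bool" assume "eventually R (nhds b \<times>\<^sub>F nhds 0)"
      then obtain Pf Pg where pf: "eventually Pf (nhds b)" and pg: "eventually Pg (nhds (0::real))"
        and pr: "\<forall>x y. Pf x \<longrightarrow> Pg y \<longrightarrow> R (x, y)" unfolding eventually_prod_filter by blast
      obtain S where S: "open S" "b \<in> S" "\<forall>x\<in>S. Pf x" using pf unfolding eventually_nhds by blast
      obtain d where d: "d > 0" "\<forall>r. dist r 0 < d \<longrightarrow> Pg r" using pg unfolding eventually_nhds_metric by blast
      obtain a where a: "i a \<in> S \<inter> P" using dens[of "S \<inter> P" b] S PQ by blast
      have "a \<noteq> 0" using low[of a] a dp ab(1) by auto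
      then obtain y where y: "f (a * y - 1) < d" using dense_ideal[OF tf ts _ d(1)] by blast
      have "Pg (f (a * y - 1))" using d(2) y ab(5)[of "a*y - 1"] by (simp add: dist_real_def)
      moreover have "Pf (i a)" using a S(3) by blast
      ultimately have "R (g (a, y))" using pr by (simp add: g_def)
      thus "\<exists>x. R (g x)" by blast
    qed
    have t1: "((\<lambda>p. i (fst p)) \<longlongrightarrow> b) H"
    proof (rule topological_tendstoI)
      fix S assume "open S" "b \<in> S"
      from ev[OF this zero_less_one] show "eventually (\<lambda>p. i (fst p) \<in> S) H" by (rule eventually_mono) simp
    qed
    have t2: "((\<lambda>p. i (fst p * snd p)) \<longlongrightarrow> 1) H"
    proof (rule topological_tendstoI)
      fix S assume S: "open S" "(1::'b) \<in> S"
      obtain e where e: "e > 0" "\<forall>y. f (y - 1) < e \<longrightarrow> i y \<in> S" using nb[OF S(1), of 1] S(2) i1 by auto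
      from ev[OF open_UNIV UNIV_I e(1)] show "eventually (\<lambda>p. i (fst p * snd p) \<in> S) H"
        by (rule eventually_mono) (use e(2) in blast)
    qed
    have cau: "add_cauchy (filtermap (\<lambda>p. i (snd p)) H)" unfolding add_cauchy_def
    proof (intro allI impI)
      fix U :: "'b set" assume U: "open U \<and> 0 \<in> U"
      obtain \<eta> where ep: "\<eta> > 0" and eU: "\<forall>y. f (y - 0) < \<eta> \<longrightarrow> i y \<in> U"
        using nb[of U 0] U hb(1) by auto
      define \<eta>0 where "\<eta>0 = \<eta>*\<delta>*\<delta>/8"
      define \<epsilon> where "\<epsilon> = min 1 (\<eta>*\<delta>/8)"
      have e0p: "\<eta>0 > 0" using ep dp unfolding \<eta>0_def by simp
      have epp: "\<epsilon> > 0" using ep dp unfolding \<epsilon>_def by simp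
      obtain U0 where U0: "open U0" "{y. f (y - 0) < \<eta>0} = i -` U0" using bp by blast
      have "0 \<in> {y. f (y - 0) < \<eta>0}" using ab(1) e0p by simp
      hence "0 \<in> i -` U0" unfolding U0(2)[symmetric] .
      hence U00: "0 \<in> U0" using hb(1) by simp
      have "open ((\<lambda>p::'b\<times>'b. fst p - snd p) -` U0)"
        using subc U0(1) continuous_on_open_vimage[OF open_UNIV] by auto
      moreover have "(b, b) \<in> (\<lambda>p::'b\<times>'b. fst p - snd p) -` U0" using U00 by simp
      ultimately obtain A1 B1 where AB: "open A1" "open B1" "(b, b) \<in> A1 \<times> B1"
        "A1 \<times> B1 \<subseteq> (\<lambda>p::'b\<times>'b. fst p - snd p) -` U0" by (rule open_prod_elim)
      define W where "W = A1 \<inter> B1 \<inter> P"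
      have Wo: "open W" "b \<in> W" using AB PQ unfolding W_def by auto
      have close: "f (a - a') < \<eta>0" if "i a \<in> W" "i a' \<in> W" for a a'
      proof -
        have "(i a, i a') \<in> A1 \<times> B1" using that unfolding W_def by auto
        hence "i a - i a' \<in> U0" using AB(4) by auto
        hence "i (a - a') \<in> U0" using hb(3) by simp
        hence "a - a' \<in> i -` U0" by simp
        hence "a - a' \<in> {y. f (y - 0) < \<eta>0}" unfolding U0(2) .
        thus ?thesis by simp
      qed
      define T where "T = {p. i (fst p) \<in> W \<and> f (fst p * snd p - 1) < \<epsilon>}"
      show "\<exists>S. eventually (\<lambda>x. x \<in> S) (filtermap (\<lambda>p. i (snd p)) H) \<and> (\<forall>x\<in>S. \<forall>y\<in>S. x - y \<in> U)"
      proof (intro exI[of _ "(\<lambda>p. i (snd p)) ` T"] conjI ballI)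
        show "eventually (\<lambda>x. x \<in> (\<lambda>p. i (snd p)) ` T) (filtermap (\<lambda>p. i (snd p)) H)"
          unfolding eventually_filtermap using ev[OF Wo epp]
          by (rule eventually_mono) (auto simp: T_def)
      next
        fix x x' assume "x \<in> (\<lambda>p. i (snd p)) ` T" "x' \<in> (\<lambda>p. i (snd p)) ` T"
        then obtain a y a' y' where p1: "i a \<in> W" "f (a * y - 1) < \<epsilon>" "x = i y"
          and p2: "i a' \<in> W" "f (a' * y' - 1) < \<epsilon>" "x' = i y'" unfolding T_def by auto
        have "f (y - y') < \<eta>"
        proof (rule calc_lemma[OF av p1(2) p2(2) close[OF p1(1) p2(1)]])
          show "\<delta> \<le> f a" using low p1(1) unfolding W_def by auto
          show "\<delta> \<le> f a'" using low p2(1) unfolding W_def by auto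
        qed (use ep dp in \<open>auto simp: \<epsilon>_def \<eta>0_def\<close>)
        hence "i (y - y') \<in> U" using eU by simp
        thus "x - x' \<in> U" using p1(3) p2(3) hb(3) by simp
      qed
    qed
    have "filtermap (\<lambda>p. i (snd p)) H \<noteq> bot" using Hne by (simp add: filtermap_bot_iff)
    then obtain c where "filtermap (\<lambda>p. i (snd p)) H \<le> nhds c"
      using cpl cau unfolding add_complete_def by blast
    hence t3: "((\<lambda>p. i (snd p)) \<longlongrightarrow> c) H" by (simp add: filterlim_def)
    have "((\<lambda>p. (\<lambda>q::'b\<times>'b. fst q * snd q) (i (fst p), i (snd p))) \<longlongrightarrow> (\<lambda>q::'b\<times>'b. fst q * snd q) (b, c)) H"
      by (rule continuous_on_tendsto_compose[OF mulc tendsto_Pair[OF t1 t3]]) auto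
    hence "((\<lambda>p. i (fst p * snd p)) \<longlongrightarrow> b * c) H" by (simp add: imul)
    hence "b * c = 1" using tendsto_unique[OF Hne _ t2] by blast
    thus ?thesis by blast
  qed
  show ?thesis unfolding is_field_ring_def using nz inv by blast
qed


theorem lemma4p8:
  fixes i :: "'a::{comm_ring_1,topological_space} \<Rightarrow> 'b::{comm_ring_1,t2_space}"
  assumes "topological_ring TYPE('a)"
    and "is_completion i"
  shows "(is_field_ring TYPE('b) \<longrightarrow> topologically_simple TYPE('a)) \<and>
         ((huber_ring TYPE('a) \<and> (\<exists>f::'a \<Rightarrow> real. topology_defined_by_abs f) \<and> topologically_simple TYPE('a))
            \<longrightarrow> is_field_ring TYPE('b))"
  using part1[OF assms(2)] part2[OF assms(2)] by blast

end
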